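(* Assume $f$ satisfies Hypothesis 2 (see context), and let $\xi_\eta$ be as in the context. Then for each $\eta\in(0,1]$ and all $s\in(0,+\infty)$: \[ |\xi_\eta(s)|\le\kappa s^{1-\alpha},\qquad |\xi_\eta'(s)|\le(1+\alpha)\kappa s^{-\alpha}+2\eta\alpha\kappa^2s^{1-2\alpha}, \] \[ |\xi_\eta''(s)f''(s)s^2|\le(\kappa+1)s^{-1}+2\eta\kappa(2+\alpha+\kappa)s^{-\alpha}+4\alpha\eta^2\kappa^2s^{1-2\alpha}. \]
   Context: Hypothesis 2 on $f\colon(0,\infty)\to\mathbb{R}$: (I1) $f\in C^{4,\beta}_{loc}(0,\infty)$ for some $\beta\in(0,1]$, $f''>0$; (I2) $\frac{1}{\alpha\kappa}s^\alpha\le s^2f''(s)$ for $s>0$, with $\alpha\in(0,1)$, $\kappa>0$; (I3) $|sf'''(s)/f''(s)|\le\kappa$ for $s>0$; (I4) there is $\mathcal{K}_{\inf}>0$ with $\int_\Omega f(\mu)\,dx>-\mathcal{K}_{\inf}$ for all $\mu\in\mathscr{P}^{ac}(\Omega)$, $\Omega=(0,L)$. For $\eta\in(0,1]$, $\xi_\eta(s)=-s\exp\!\big(\int_0^s\frac{2\eta}{y^2f''(y)}dy\big)\int_s^\infty\exp\!\big(-\int_0^y\frac{2\eta}{z^2f''(z)}dz\big)\frac{dy}{y^3f''(y)}$. *)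

theory Defs
  imports "HOL-Analysis.Analysis"
begin

definition C4beta_loc :: "real \<Rightarrow> (real \<Rightarrow> real) \<Rightarrow> bool" where
  "C4beta_loc \<beta> f \<longleftrightarrow>
     (\<forall>k<4. \<forall>x>0. ((deriv ^^ k) f) differentiable (at x)) \<and>
     (\<forall>a b. 0 < a \<longrightarrow> a \<le> b \<longrightarrow>
        (\<exists>C. \<forall>x\<in>{a..b}. \<forall>y\<in>{a..b}.
            \<bar>(deriv ^^ 4) f x - (deriv ^^ 4) f y\<bar> \<le> C * \<bar>x - y\<bar> powr \<beta>))"

text \<open>Hypothesis 2 on f, with parameters beta, alpha, kappa, the interval length L
  (Omega = (0,L)) and the constant K_inf. Elements of P^ac(Omega) are represented by their
  Lebesgue densities rho on (0,L).\<close>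
definition hypothesis2 ::
  "(real \<Rightarrow> real) \<Rightarrow> real \<Rightarrow> real \<Rightarrow> real \<Rightarrow> real \<Rightarrow> real \<Rightarrow> bool" where
  "hypothesis2 f \<beta> \<alpha> \<kappa> L K \<longleftrightarrow>
     0 < \<beta> \<and> \<beta> \<le> 1 \<and> 0 < \<alpha> \<and> \<alpha> < 1 \<and> 0 < \<kappa> \<and> 0 < L \<and>
     C4beta_loc \<beta> f \<and>
     (\<forall>s>0. deriv (deriv f) s > 0) \<and>
     (\<forall>s>0. s powr \<alpha> / (\<alpha> * \<kappa>) \<le> s\<^sup>2 * deriv (deriv f) s) \<and>
     (\<forall>s>0. \<bar>s * deriv (deriv (deriv f)) s / deriv (deriv f) s\<bar> \<le> \<kappa>) \<and>
     0 < K \<and>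
     (\<forall>\<rho>::real \<Rightarrow> real. \<rho> \<in> borel_measurable lborel \<longrightarrow>
        (\<forall>x\<in>{0<..<L}. 0 < \<rho> x) \<longrightarrow>
        set_integrable lborel {0<..<L} \<rho> \<longrightarrow>
        (LBINT x:{0<..<L}. \<rho> x) = 1 \<longrightarrow>
        (LBINT x:{0<..<L}. f (\<rho> x)) > - K)"

definition Gfun :: "(real \<Rightarrow> real) \<Rightarrow> real \<Rightarrow> real \<Rightarrow> real" where
  "Gfun f \<eta> s = (LBINT y:{0<..s}. 2 * \<eta> / (y\<^sup>2 * deriv (deriv f) y))"

definition xi :: "(real \<Rightarrow> real) \<Rightarrow> real \<Rightarrow> real \<Rightarrow> real" where
  "xi f \<eta> s = - s * exp (Gfun f \<eta> s) *
     (LBINT y:{s<..}. exp (- Gfun f \<eta> y) / (y ^ 3 * deriv (deriv f) y))"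

end

theory Submission imports Defs begin

lemma int_bound:
  fixes \<phi> \<psi> :: "real \<Rightarrow> real"
  assumes "S \<in> sets lebesgue" "continuous_on S \<phi>" "\<psi> integrable_on S"
    "\<And>x. x \<in> S \<Longrightarrow> \<bar>\<phi> x\<bar> \<le> \<psi> x"
  shows "\<phi> integrable_on S"
  by (rule measurable_bounded_by_integrable_imp_integrable[OF
        continuous_imp_measurable_on_sets_lebesgue[OF assms(2,1)] assms(3)])
     (use assms in auto)

lemma lb_conv:
  fixes \<phi> :: "real \<Rightarrow> real"
  assumes "S \<in> sets borel" "continuous_on S \<phi>" "\<And>x. x \<in> S \<Longrightarrow> 0 \<le> \<phi> x" "\<phi> integrable_on S"
  shows "set_integrable lborel S \<phi>" "(LBINT x:S. \<phi> x) = integral S \<phi>"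
proof -
  have "\<phi> absolutely_integrable_on S"
    using nonnegative_absolutely_integrable_1[OF assms(4)] assms(3) by blast
  hence "integrable lebesgue (\<lambda>x. indicator S x *\<^sub>R \<phi> x)"
    unfolding set_integrable_def by simp
  moreover have "(\<lambda>x. indicator S x *\<^sub>R \<phi> x) \<in> borel_measurable lborel"
    using borel_measurable_continuous_on_indicator[OF assms(1,2)] by simp
  ultimately show si: "set_integrable lborel S \<phi>"
    unfolding set_integrable_def using integrable_completion by blast
  show "(LBINT x:S. \<phi> x) = integral S \<phi>"
    using set_borel_integral_eq_integral(2)[OF si] .
qed

lemma head_deriv:
  fixes h :: "real \<Rightarrow> real"
  assumes cont: "continuous_on {0<..} h" and nn: "\<And>y. y > 0 \<Longrightarrow> 0 \<le> h y"
    and bd: "\<And>y. y > 0 \<Longrightarrow> h y \<le> C * y powr (-\<alpha>)" and al: "\<alpha> < 1" and t: "t > 0"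
  shows "((\<lambda>t. LBINT y:{0<..t}. h y) has_real_derivative h t) (at t)"
proof -
  have int0: "h integrable_on {0<..u}" if "u > 0" for u
  proof (rule int_bound)
    show "continuous_on {0<..u} h" using cont by (rule continuous_on_subset) auto
    show "(\<lambda>y. C * y powr (-\<alpha>)) integrable_on {0<..u}"
      using integrable_on_cmult_left[OF integrable_on_powr_from_0'[of "-\<alpha>" u]] al that by simp
  qed (use nn bd in auto)
  have neg: "negligible {x \<in> {0<..u} - {0..u}. h x \<noteq> 0}" "negligible {x \<in> {0..u} - {0<..u}. h x \<noteq> 0}"
    if "u > 0" for u
    by (auto intro: negligible_subset[of "{0::real}"])
  have int1: "h integrable_on {0..u}" if "u > 0" for u
    using integrable_spike_set[OF int0[OF that] neg[OF that]] .
  have eq: "(LBINT y:{0<..u}. h y) = integral {0..u} h" if "u > 0" for u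
  proof -
    have "(LBINT y:{0<..u}. h y) = integral {0<..u} h"
      by (rule lb_conv(2)) (use that int0 nn in \<open>auto intro: continuous_on_subset[OF cont]\<close>)
    also have "\<dots> = integral {0..u} h" using integral_spike_set[OF neg[OF that]] .
    finally show ?thesis .
  qed
  define a where "a = t/2"
  define b where "b = 2*t"
  have ab: "0 < a" "a < t" "t < b" using t by (auto simp: a_def b_def)
  have eq2: "(LBINT y:{0<..u}. h y) = integral {0..a} h + integral {a..u} h" if "u \<in> {a<..<b}" for u
    using eq[of u] Henstock_Kurzweil_Integration.integral_combine[of 0 a u h] int1[of u] that ab by auto
  have "((\<lambda>u. integral {a..u} h) has_real_derivative h t) (at t within {a..b})"
    by (rule integral_has_real_derivative) (use ab in \<open>auto intro: continuous_on_subset[OF cont]\<close>)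
  hence "((\<lambda>u. integral {a..u} h) has_real_derivative h t) (at t)"
    using ab by (simp add: at_within_Icc_at)
  hence "((\<lambda>u. integral {0..a} h + integral {a..u} h) has_real_derivative h t) (at t)"
    by (auto intro!: derivative_eq_intros)
  thus ?thesis
    by (rule has_field_derivative_transform_within_open[where S="{a<..<b}"]) (use ab eq2 in auto)
qed

lemma tail_deriv:
  fixes k :: "real \<Rightarrow> real"
  assumes cont: "continuous_on {0<..} k" and nn: "\<And>y. y > 0 \<Longrightarrow> 0 \<le> k y"
    and bd: "\<And>y. y > 0 \<Longrightarrow> k y \<le> C * y powr (-1-\<alpha>)" and al: "\<alpha> > 0" and t: "t > 0"
  shows "((\<lambda>t. LBINT y:{t<..}. k y) has_real_derivative - k t) (at t)"
    and "k integrable_on {t..}" and "(LBINT y:{t<..}. k y) = integral {t..} k"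
proof -
  have int0: "k integrable_on {u..}" if "u > 0" for u
  proof (rule int_bound)
    show "continuous_on {u..} k" using cont by (rule continuous_on_subset) (use that in auto)
    show "(\<lambda>y. C * y powr (-1-\<alpha>)) integrable_on {u..}"
      using integrable_on_cmult_left[OF has_integral_integrable[OF has_integral_powr_to_inf[of "-1-\<alpha>" u]]] al that by simp
  qed (use nn bd that in auto)
  have neg: "negligible {x \<in> {u<..} - {u..}. k x \<noteq> 0}" "negligible {x \<in> {u..} - {u<..}. k x \<noteq> 0}"
    for u :: real
    by (auto intro: negligible_subset[of "{u}"])
  have eq: "(LBINT y:{u<..}. k y) = integral {u..} k" if "u > 0" for u
  proof -
    have i: "k integrable_on {u<..}" using integrable_spike_set[OF int0[OF that] neg(2)[of u] neg(1)[of u]] .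
    have "(LBINT y:{u<..}. k y) = integral {u<..} k"
      by (rule lb_conv(2)) (use that i nn in \<open>auto intro: continuous_on_subset[OF cont]\<close>)
    also have "\<dots> = integral {u..} k" using integral_spike_set[OF neg[of u]] .
    finally show ?thesis .
  qed
  show "k integrable_on {t..}" using int0[OF t] .
  show "(LBINT y:{t<..}. k y) = integral {t..} k" using eq[OF t] .
  define a where "a = t/2"
  define b where "b = 2*t"
  have ab: "0 < a" "a < t" "t < b" using t by (auto simp: a_def b_def)
  have eq2: "(LBINT y:{u<..}. k y) = integral {a..} k - integral {a..u} k" if "u \<in> {a<..<b}" for u
  proof -
    have i1: "(k has_integral integral {a..u} k) {a..u}"
      using integrable_integral integrable_on_subinterval[OF int0[of a], of a u] ab by auto
    have i2: "(k has_integral integral {u..} k) {u..}"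
      using integrable_integral int0[of u] ab that by auto
    have "(k has_integral (integral {a..u} k + integral {u..} k)) ({a..u} \<union> {u..})"
      by (rule has_integral_Un[OF i1 i2]) (auto intro: negligible_subset[of "{u}"])
    moreover have "{a..u} \<union> {u..} = {a..}" using that by auto
    ultimately have "integral {a..} k = integral {a..u} k + integral {u..} k"
      by (simp add: integral_unique)
    thus ?thesis using eq[of u] that ab by simp
  qed
  have "((\<lambda>u. integral {a..u} k) has_real_derivative k t) (at t within {a..b})"
    by (rule integral_has_real_derivative) (use ab in \<open>auto intro: continuous_on_subset[OF cont]\<close>)
  hence "((\<lambda>u. integral {a..u} k) has_real_derivative k t) (at t)"
    using ab by (simp add: at_within_Icc_at)
  hence "((\<lambda>u. integral {a..} k - integral {a..u} k) has_real_derivative - k t) (at t)"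
    by (auto intro!: derivative_eq_intros)
  thus "((\<lambda>t. LBINT y:{t<..}. k y) has_real_derivative - k t) (at t)"
    by (rule has_field_derivative_transform_within_open[where S="{a<..<b}"]) (use ab eq2 in auto)
qed

theorem corollary3p1:
  fixes f :: "real \<Rightarrow> real" and \<beta> \<alpha> \<kappa> L K \<eta> s :: real
  assumes "hypothesis2 f \<beta> \<alpha> \<kappa> L K"
    and "0 < \<eta>" and "\<eta> \<le> 1"
    and "0 < s"
  shows "xi f \<eta> differentiable (at s) \<and> deriv (xi f \<eta>) differentiable (at s) \<and>
    \<bar>xi f \<eta> s\<bar> \<le> \<kappa> * s powr (1 - \<alpha>) \<and>
    \<bar>deriv (xi f \<eta>) s\<bar> \<le> (1 + \<alpha>) * \<kappa> * s powr (- \<alpha>)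
        + 2 * \<eta> * \<alpha> * \<kappa>\<^sup>2 * s powr (1 - 2 * \<alpha>) \<and>
    \<bar>deriv (deriv (xi f \<eta>)) s * deriv (deriv f) s * s\<^sup>2\<bar>
      \<le> (\<kappa> + 1) * s powr (- 1) + 2 * \<eta> * \<kappa> * (2 + \<alpha> + \<kappa>) * s powr (- \<alpha>)
        + 4 * \<alpha> * \<eta>\<^sup>2 * \<kappa>\<^sup>2 * s powr (1 - 2 * \<alpha>)"
proof -
  define F2 where "F2 = deriv (deriv f)"
  define F3 where "F3 = deriv F2"
  note H = assms(1)[unfolded hypothesis2_def C4beta_loc_def]
  have al: "0 < \<alpha>" "\<alpha> < 1" and ka: "0 < \<kappa>" using H by auto
  have F2pos: "\<And>x. x > 0 \<Longrightarrow> F2 x > 0" using H by (auto simp: F2_def)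
  have I2: "\<And>x. x > 0 \<Longrightarrow> x powr \<alpha> / (\<alpha> * \<kappa>) \<le> x\<^sup>2 * F2 x" using H by (auto simp: F2_def)
  have I3: "\<And>x. x > 0 \<Longrightarrow> \<bar>x * F3 x / F2 x\<bar> \<le> \<kappa>" using H by (auto simp: F2_def F3_def)
  have "\<And>x. x > 0 \<Longrightarrow> ((deriv ^^ 2) f) differentiable (at x)" using H by auto
  hence "\<And>x. x > 0 \<Longrightarrow> F2 differentiable (at x)" by (simp add: F2_def numeral_2_eq_2)
  hence dF2: "\<And>x. x > 0 \<Longrightarrow> (F2 has_real_derivative F3 x) (at x)"
    by (simp add: F3_def DERIV_deriv_iff_real_differentiable)
  have cF2: "continuous_on {0<..} F2"
    using dF2 by (intro continuous_at_imp_continuous_on) (auto intro: DERIV_isCont)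
  define g where "g = (\<lambda>y. 1 / (y\<^sup>2 * F2 y))"
  have gpos: "\<And>y. y > 0 \<Longrightarrow> g y > 0" using F2pos by (simp add: g_def)
  have gbd: "g y \<le> \<alpha> * \<kappa> * y powr (-\<alpha>)" if y: "y > 0" for y
  proof -
    have "g y \<le> 1 / (y powr \<alpha> / (\<alpha> * \<kappa>))"
      unfolding g_def by (rule divide_left_mono[OF I2[OF y]]) (use y al ka F2pos[OF y] in auto)
    thus ?thesis by (simp add: powr_minus divide_simps)
  qed
  define h where "h = (\<lambda>y. 2 * \<eta> / (y\<^sup>2 * deriv (deriv f) y))"
  have h_g: "\<And>y. h y = 2 * \<eta> * g y" by (simp add: h_def g_def F2_def)
  define G where "G = Gfun f \<eta>"
  have G_eq: "G = (\<lambda>t. LBINT y:{0<..t}. h y)" by (simp add: G_def Gfun_def[abs_def] h_def)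
  have dG: "\<And>t. t > 0 \<Longrightarrow> (G has_real_derivative h t) (at t)"
    unfolding G_eq
  proof (rule head_deriv[where C="2*\<eta>*\<alpha>*\<kappa>" and \<alpha>=\<alpha>])
    show "continuous_on {0<..} h" unfolding h_def F2_def[symmetric]
      by (intro continuous_intros cF2) (auto dest: F2pos)
    show "\<And>y. 0 < y \<Longrightarrow> 0 \<le> h y" using gpos assms(2) by (simp add: h_g less_imp_le)
    show "\<And>y. 0 < y \<Longrightarrow> h y \<le> 2 * \<eta> * \<alpha> * \<kappa> * y powr - \<alpha>"
      using gbd assms(2) by (simp add: h_g mult.assoc)
  qed (use al in auto)
  have Gnn: "G y \<ge> 0" for y
    unfolding G_eq set_lebesgue_integral_def
    by (rule Bochner_Integration.integral_nonneg) (use gpos assms(2) in \<open>auto simp: h_g indicator_def less_imp_le\<close>)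
  have Gmono: "G x \<le> G y" if "0 < x" "x \<le> y" for x y
  proof (rule DERIV_nonneg_imp_nondecreasing[OF that(2)])
    fix z assume "x \<le> z" "z \<le> y"
    hence z: "z > 0" using that by auto
    show "\<exists>d. (G has_real_derivative d) (at z) \<and> 0 \<le> d"
      using dG[OF z] gpos[OF z] assms(2) by (intro exI[of _ "h z"]) (simp add: h_g)
  qed
  have cG: "continuous_on {0<..} G"
    using dG by (intro continuous_at_imp_continuous_on) (auto intro: DERIV_isCont)
  define k where "k = (\<lambda>y. exp (- G y) / (y ^ 3 * deriv (deriv f) y))"
  have k_g: "\<And>y. y > 0 \<Longrightarrow> k y = exp (- G y) * (1/y) * g y"
    by (simp add: k_def g_def F2_def power2_eq_square power3_eq_cube)
  have knn: "\<And>y. y > 0 \<Longrightarrow> 0 \<le> k y" using gpos by (simp add: k_g less_imp_le)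
  have kbd: "k y \<le> \<alpha> * \<kappa> * y powr (-1-\<alpha>)" if y: "y > 0" for y
  proof -
    have "k y \<le> 1 * (1/y) * (\<alpha> * \<kappa> * y powr (-\<alpha>))"
      unfolding k_g[OF y] using y Gnn[of y] gbd[OF y] gpos[OF y]
      by (intro mult_mono) auto
    also have "\<dots> = \<alpha> * \<kappa> * y powr (-1-\<alpha>)"
      using y by (simp add: powr_diff powr_minus divide_simps)
    finally show ?thesis .
  qed
  have ck: "continuous_on {0<..} k" unfolding k_def F2_def[symmetric]
    by (intro continuous_intros cF2 cG) (auto dest: F2pos)
  define T where "T = (\<lambda>t. LBINT y:{t<..}. k y)"
  have TD1: "\<And>t. t > 0 \<Longrightarrow> (T has_real_derivative - k t) (at t)"
    unfolding T_def by (rule tail_deriv(1)[OF ck, where C="\<alpha>*\<kappa>" and \<alpha>=\<alpha>]) (use knn kbd al in auto)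
  have TD2: "\<And>t. t > 0 \<Longrightarrow> k integrable_on {t..}"
    by (rule tail_deriv(2)[OF ck, where C="\<alpha>*\<kappa>" and \<alpha>=\<alpha>]) (use knn kbd al in auto)
  have TD3: "\<And>t. t > 0 \<Longrightarrow> T t = integral {t..} k"
    unfolding T_def by (rule tail_deriv(3)[OF ck, where C="\<alpha>*\<kappa>" and \<alpha>=\<alpha>]) (use knn kbd al in auto)
  have xi_eq: "xi f \<eta> = (\<lambda>t. - t * exp (G t) * T t)"
    by (simp add: xi_def[abs_def] G_def T_def k_def)
  define X where "X = xi f \<eta>"
  define X1 where "X1 = (\<lambda>t. X t / t + 2 * \<eta> * g t * X t + g t)"
  have dX: "(X has_real_derivative X1 t) (at t)" if t: "t > 0" for t
  proof -
    have "((\<lambda>t. - t * exp (G t) * T t) has_real_derivative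
        (- exp (G t) * T t - t * (exp (G t) * h t) * T t + (- t * exp (G t)) * (- k t))) (at t)"
      using dG[OF t] TD1[OF t]
      by (auto intro!: derivative_eq_intros simp: algebra_simps)
    moreover have "- exp (G t) * T t - t * (exp (G t) * h t) * T t + (- t * exp (G t)) * (- k t) = X1 t"
      using t F2pos[OF t] unfolding X1_def X_def xi_eq h_g k_g[OF t]
      by (simp add: g_def field_simps exp_minus power2_eq_square)
    ultimately show ?thesis unfolding X_def xi_eq by simp
  qed
  have derX: "\<And>t. t > 0 \<Longrightarrow> deriv X t = X1 t" using dX by (simp add: DERIV_imp_deriv)
  define g' where "g' = (\<lambda>t. - (2 * t * F2 t + t\<^sup>2 * F3 t) / (t\<^sup>2 * F2 t)\<^sup>2)"
  have dg: "(g has_real_derivative g' t) (at t)" if t: "t > 0" for t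
    unfolding g_def g'_def using dF2[OF t] F2pos[OF t] t
    by (auto intro!: derivative_eq_intros simp: power2_eq_square field_simps)
  define X2 where "X2 = (\<lambda>t. (X1 t * t - X t) / t\<^sup>2 + 2 * \<eta> * (g' t * X t + g t * X1 t) + g' t)"
  have dX1: "(X1 has_real_derivative X2 t) (at t)" if t: "t > 0" for t
  proof -
    have "((\<lambda>t. X t / t + 2 * \<eta> * g t * X t + g t) has_real_derivative X2 t) (at t)"
      using dX[OF t] dg[OF t] t
      by (auto intro!: derivative_eq_intros simp: X2_def power2_eq_square field_simps)
    thus ?thesis by (simp add: X1_def)
  qed
  have ddX: "(deriv X has_real_derivative X2 s) (at s)"
    by (rule has_field_derivative_transform_within_open[OF dX1[OF assms(4)], where S="{0<..}"])
       (use assms(4) in \<open>auto simp: derX\<close>)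
  have d1: "deriv X s = X1 s" using derX assms(4) by simp
  have d2: "deriv (deriv X) s = X2 s" using ddX by (simp add: DERIV_imp_deriv)
  have s: "s > 0" by fact
  have et: "\<eta> > 0" by fact
  define p where "p = s powr (-\<alpha>)"
  have pp: "p > 0" using s by (simp add: p_def)
  have P1: "s powr (1-\<alpha>) = s*p"
  proof -
    have "s powr (1-\<alpha>) = s powr 1 * s powr (-\<alpha>)" using powr_add[of s 1 "-\<alpha>"] by simp
    thus ?thesis using s by (simp add: p_def)
  qed
  have P2: "s powr (1-2*\<alpha>) = s*p*p"
  proof -
    have e: "(1-\<alpha>) + (-\<alpha>) = 1 - 2*\<alpha>" by simp
    have "s powr (1-2*\<alpha>) = s powr (1-\<alpha>) * s powr (-\<alpha>)" using powr_add[of s "1-\<alpha>" "-\<alpha>"] unfolding e .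
    thus ?thesis using P1 by (simp add: p_def)
  qed
  have P3: "s powr (-1) = 1/s" using s by (simp add: powr_minus divide_simps)
  have B0: "\<bar>X s\<bar> \<le> \<kappa> * s * p"
  proof -
    have i1: "((\<lambda>y. exp (G s) * k y) has_integral exp (G s) * T s) {s..}"
      using has_integral_mult_right[OF integrable_integral[OF TD2[OF s]]] TD3[OF s] by simp
    have i2: "((\<lambda>y. \<alpha> * \<kappa> * y powr (-1-\<alpha>)) has_integral \<alpha> * \<kappa> * (-(s powr (-1-\<alpha>+1)) / (-1-\<alpha>+1))) {s..}"
      by (rule has_integral_mult_right[OF has_integral_powr_to_inf]) (use al s in auto)
    have "exp (G s) * T s \<le> \<alpha> * \<kappa> * (-(s powr (-1-\<alpha>+1)) / (-1-\<alpha>+1))"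
    proof (rule has_integral_le[OF i1 i2])
      fix y assume "y \<in> {s..}"
      hence y: "y > 0" "s \<le> y" using s by auto
      have "exp (G s) * k y = exp (G s - G y) * (1/y) * g y"
        using y by (simp add: k_g exp_diff exp_minus divide_simps)
      also have "\<dots> \<le> 1 * (1/y) * (\<alpha> * \<kappa> * y powr (-\<alpha>))"
        using y Gmono[OF s y(2)] gbd[OF y(1)] gpos[OF y(1)] by (intro mult_mono) auto
      also have "\<dots> = \<alpha> * \<kappa> * y powr (-1-\<alpha>)"
        using y by (simp add: powr_diff powr_minus divide_simps)
      finally show "exp (G s) * k y \<le> \<alpha> * \<kappa> * y powr (-1-\<alpha>)" .
    qed
    also have "\<alpha> * \<kappa> * (-(s powr (-1-\<alpha>+1)) / (-1-\<alpha>+1)) = \<kappa> * p"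
      using al by (simp add: p_def)
    finally have up: "exp (G s) * T s \<le> \<kappa> * p" .
    have "T s \<ge> 0" unfolding TD3[OF s] by (rule integral_nonneg[OF TD2[OF s]]) (use s knn in auto)
    hence "\<bar>X s\<bar> = s * (exp (G s) * T s)" using s by (simp add: X_def xi_eq abs_mult)
    also have "\<dots> \<le> s * (\<kappa> * p)" using up s by (intro mult_left_mono) auto
    finally show ?thesis by (simp add: mult_ac)
  qed
  have g_s: "0 < g s" "g s \<le> \<alpha> * \<kappa> * p" using gpos[OF s] gbd[OF s] by (auto simp: p_def)
  have X1b: "\<bar>X1 s\<bar> \<le> (1 + \<alpha>) * \<kappa> * p + 2 * \<eta> * \<alpha> * \<kappa>\<^sup>2 * (s*p*p)"
  proof -
    have a1: "\<bar>X s / s\<bar> \<le> \<kappa> * p"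
      using B0 s by (simp add: abs_divide divide_simps mult_ac)
    have "\<bar>2 * \<eta> * g s * X s\<bar> = 2 * \<eta> * g s * \<bar>X s\<bar>" using et g_s by (simp add: abs_mult)
    also have "\<dots> \<le> 2 * \<eta> * (\<alpha> * \<kappa> * p) * (\<kappa> * s * p)"
      using et g_s B0 by (intro mult_mono) auto
    finally have a2: "\<bar>2 * \<eta> * g s * X s\<bar> \<le> 2 * \<eta> * (\<alpha> * \<kappa> * p) * (\<kappa> * s * p)" .
    have "\<bar>X1 s\<bar> \<le> \<bar>X s / s\<bar> + \<bar>2 * \<eta> * g s * X s\<bar> + \<bar>g s\<bar>"
      unfolding X1_def by linarith
    also have "\<dots> \<le> \<kappa> * p + 2 * \<eta> * (\<alpha> * \<kappa> * p) * (\<kappa> * s * p) + \<alpha> * \<kappa> * p"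
      using a1 a2 g_s by linarith
    also have "\<dots> = (1 + \<alpha>) * \<kappa> * p + 2 * \<eta> * \<alpha> * \<kappa>\<^sup>2 * (s*p*p)"
      by (simp add: algebra_simps power2_eq_square)
    finally show ?thesis .
  qed
  define r where "r = s * F3 s / F2 s"
  have rb: "\<bar>r\<bar> \<le> \<kappa>" using I3[OF s] by (simp add: r_def)
  have X2eq: "X2 s * F2 s * s\<^sup>2 = - 2 * \<eta> * X s * (1 + r) / s - (1 + r) / s + 2 * \<eta> * X1 s"
    using s F2pos[OF s] unfolding X2_def g'_def g_def r_def X1_def
    by (simp add: field_simps power2_eq_square)
  have X2b: "\<bar>X2 s * F2 s * s\<^sup>2\<bar> \<le> (\<kappa> + 1) * (1/s) + 2 * \<eta> * \<kappa> * (2 + \<alpha> + \<kappa>) * p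
        + 4 * \<alpha> * \<eta>\<^sup>2 * \<kappa>\<^sup>2 * (s*p*p)"
  proof -
    have r1: "\<bar>1 + r\<bar> \<le> 1 + \<kappa>" using rb by linarith
    have "\<bar>2 * \<eta> * X s * (1 + r) / s\<bar> = 2 * \<eta> * \<bar>X s\<bar> * \<bar>1 + r\<bar> / s"
      using et s by (simp add: abs_mult abs_divide)
    also have "\<dots> \<le> 2 * \<eta> * (\<kappa> * s * p) * (1 + \<kappa>) / s"
      using et s B0 r1 by (intro divide_right_mono mult_mono) auto
    also have "\<dots> = 2 * \<eta> * \<kappa> * (1 + \<kappa>) * p" using s by (simp add: field_simps)
    finally have b1: "\<bar>2 * \<eta> * X s * (1 + r) / s\<bar> \<le> 2 * \<eta> * \<kappa> * (1 + \<kappa>) * p" .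
    have b2: "\<bar>(1 + r) / s\<bar> \<le> (1 + \<kappa>) * (1/s)"
      using r1 s by (simp add: abs_divide divide_right_mono)
    have b3: "\<bar>2 * \<eta> * X1 s\<bar> \<le> 2 * \<eta> * ((1 + \<alpha>) * \<kappa> * p + 2 * \<eta> * \<alpha> * \<kappa>\<^sup>2 * (s*p*p))"
      using X1b et by (simp add: abs_mult)
    have "\<bar>X2 s * F2 s * s\<^sup>2\<bar> \<le> \<bar>2 * \<eta> * X s * (1 + r) / s\<bar> + \<bar>(1 + r) / s\<bar> + \<bar>2 * \<eta> * X1 s\<bar>"
      unfolding X2eq by linarith
    also have "\<dots> \<le> 2 * \<eta> * \<kappa> * (1 + \<kappa>) * p + (1 + \<kappa>) * (1/s) + 2 * \<eta> * ((1 + \<alpha>) * \<kappa> * p + 2 * \<eta> * \<alpha> * \<kappa>\<^sup>2 * (s*p*p))"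
      using b1 b2 b3 by linarith
    also have "\<dots> = (\<kappa> + 1) * (1/s) + 2 * \<eta> * \<kappa> * (2 + \<alpha> + \<kappa>) * p
        + 4 * \<alpha> * \<eta>\<^sup>2 * \<kappa>\<^sup>2 * (s*p*p)"
      by (simp add: algebra_simps power2_eq_square)
    finally show ?thesis .
  qed
  have diff1: "X differentiable (at s)" using dX[OF s] real_differentiable_def by blast
  have diff2: "deriv X differentiable (at s)" using ddX real_differentiable_def by blast
  show ?thesis
    using diff1 diff2 B0 X1b X2b unfolding X_def[symmetric] d1 d2 P1 P2 P3 p_def[symmetric] F2_def[symmetric]
    by (simp add: mult_ac)
qed

end
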